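(* Let $q$ be a prime such that the multiplicative order of $2$ in $(\mathbb{Z}/q\mathbb{Z})^\times$ is congruent to $2 \pmod 4$. Let $n \geq 1$ be an integer, $v = 3q^n$, and $k$ an odd positive integer. Then there are no integers $a_1, \ldots, a_k$ with $1 \leq a_j < v$ such that $\prod_{j=1}^k a_j = \prod_{j=1}^k (v - a_j)$. *)

theory Defs
  imports "HOL-Number_Theory.Number_Theory"
begin

end

theory Submission
  imports Defs
begin

lemma two_pow_neg:
  fixes q :: nat
  assumes "prime q" and "ord q 2 mod 4 = 2"
  shows "\<exists>m. odd m \<and> int q dvd 2 ^ m + 1"
proof -
  define r where "r = ord q (2::nat)"
  obtain t where ot: "r = 4 * t + 2" using assms(2) unfolding r_def by (metis div_mult_mod_eq add.commute mult.commute)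
  define m where "m = 2 * t + 1"
  have om: "r = 2 * m" using ot m_def by simp
  have c1: "[2 ^ r = 1] (mod q)" unfolding r_def by (rule ord)
  have c2: "\<not> [2 ^ m = 1] (mod q)" unfolding r_def by (rule ord_minimal) (use om m_def r_def in auto)
  have d1: "int q dvd (2 ^ m - 1) * (2 ^ m + 1)"
  proof -
    have "[int 2 ^ r = int 1] (mod int q)" using c1 by (metis cong_int_iff of_nat_power)
    hence "int q dvd 2 ^ r - 1" by (simp add: cong_iff_dvd_diff)
    moreover have "(2::int) ^ r - 1 = (2 ^ m - 1) * (2 ^ m + 1)" unfolding om
      by (simp add: power_mult algebra_simps power2_eq_square)
    ultimately show ?thesis by simp
  qed
  have d2: "\<not> int q dvd 2 ^ m - 1"
  proof
    assume "int q dvd 2 ^ m - 1"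
    hence "[int 2 ^ m = int 1] (mod int q)" by (simp add: cong_iff_dvd_diff)
    hence "[2 ^ m = 1] (mod q)" by (metis cong_int_iff of_nat_power)
    with c2 show False by simp
  qed
  have "prime (int q)" using assms(1) by simp
  hence "int q dvd 2 ^ m + 1" using d1 d2 prime_dvd_mult_iff by blast
  moreover have "odd m" using m_def by simp
  ultimately show ?thesis by blast
qed

lemma decomp:
  fixes q :: int
  assumes "q > 1"
  shows "x > 0 \<Longrightarrow> \<exists>u x'. x = q ^ u * x' \<and> \<not> q dvd x' \<and> x' > 0"
proof (induction "nat x" arbitrary: x rule: less_induct)
  case less
  show ?case
  proof (cases "q dvd x")
    case False
    then show ?thesis using less.prems by (metis mult_1 power_0)
  next
    case True
    then obtain y where y: "x = q * y" by blast
    have "y > 0" using less.prems y assms by (simp add: zero_less_mult_iff)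
    have "nat y < nat x" using y assms \<open>y > 0\<close> by simp
    then obtain u y' where "y = q ^ u * y'" "\<not> q dvd y'" "y' > 0" using less.hyps \<open>y > 0\<close> by blast
    then show ?thesis using y by (metis mult.assoc power_Suc)
  qed
qed

lemma pair:
  fixes q n m :: nat and a :: int
  assumes q: "prime q" "q \<noteq> 2" and "odd m" and tm: "int q dvd 2 ^ m + 1"
    and a: "1 \<le> a" "a < 3 * int q ^ n"
  shows "\<exists>u a' w b'. a = int q ^ u * a' \<and> 3 * int q ^ n - a = int q ^ w * b' \<and>
           \<not> int q dvd a' \<and> \<not> int q dvd b' \<and> a' > 0 \<and> b' > 0 \<and> int q dvd b' ^ m + a' ^ m"
proof -
  have q3: "q \<ge> 3" proof -
    have "q \<ge> 2" using q(1) prime_ge_2_nat by blast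
    thus ?thesis using q(2) by linarith
  qed
  have q1: "int q > 1" using q3 by simp
  obtain u a' where ua: "a = int q ^ u * a'" "\<not> int q dvd a'" "a' > 0" using decomp[OF q1, of a] a by auto
  show ?thesis
  proof (cases "u < n")
    case True
    define b' where "b' = 3 * int q ^ (n - u) - a'"
    have e: "3 * int q ^ n - a = int q ^ u * b'"
      using True unfolding b'_def ua(1) by (simp add: algebra_simps power_add[symmetric])
    have "int q ^ u * b' > 0" using e a by simp
    hence bpos: "b' > 0" using q1 by (simp add: zero_less_mult_iff)
    have dq: "int q dvd 3 * int q ^ (n - u)" using True by simp
    have nb: "\<not> int q dvd b'"
    proof
      assume "int q dvd b'"
      hence "int q dvd 3 * int q ^ (n - u) - b'" using dq by (rule dvd_diff[rotated])
      thus False using ua(2) unfolding b'_def by simp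
    qed
    have "[b' = - a'] (mod int q)" unfolding b'_def using dq
      by (simp add: cong_iff_dvd_diff)
    hence "[b' ^ m = (- a') ^ m] (mod int q)" by (rule cong_pow)
    hence "int q dvd b' ^ m + a' ^ m" using \<open>odd m\<close> by (simp add: cong_iff_dvd_diff)
    thus ?thesis using e ua nb bpos by blast
  next
    case False
    show ?thesis
    proof (cases "u = n")
      case True
      have "int q ^ n * a' < int q ^ n * 3" using a ua True by (simp add: mult.commute)
      hence "a' < 3" using q1 by (simp add: mult_less_cancel_left_pos)
      hence "a' = 1 \<or> a' = 2" using ua(3) by auto
      have n2: "\<not> int q dvd 2"
      proof
        assume "int q dvd 2" hence "int q \<le> 2" by (rule zdvd_imp_le) simp
        with q3 show False by simp
      qed
      have n1: "\<not> int q dvd 1" using q1 by simp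
      have e: "3 * int q ^ n - a = int q ^ n * (3 - a')" using ua True by (simp add: algebra_simps)
      have A: "int q dvd (3 - a') ^ m + a' ^ m"
        using \<open>a' = 1 \<or> a' = 2\<close> tm by (elim disjE) (simp_all add: add.commute)
      have B: "\<not> int q dvd (3 - a')"
        using \<open>a' = 1 \<or> a' = 2\<close> n1 n2 by (elim disjE) simp_all
      have C: "3 - a' > 0" using \<open>a' < 3\<close> by simp
      show ?thesis using ua e True A B C by blast
    next
      case False
      with \<open>\<not> u < n\<close> have "u \<ge> Suc n" by simp
      hence "int q ^ Suc n \<le> int q ^ u" using q1 by (intro power_increasing) auto
      also have "\<dots> \<le> a" using ua by (simp add: mult_le_cancel_left1)
      finally have "int q * int q ^ n \<le> a" by simp
      moreover have "3 * int q ^ n \<le> int q * int q ^ n" using q3 by (simp add: mult_right_mono)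
      ultimately show ?thesis using a by simp
    qed
  qed
qed

lemma cancel_pow:
  fixes q X Y :: int
  assumes "q ^ x * X = q ^ y * Y" "\<not> q dvd X" "\<not> q dvd Y" "q > 1"
  shows "X = Y"
proof -
  have gen: "X = Y" if h: "q ^ x * X = q ^ y * Y" "\<not> q dvd X" "\<not> q dvd Y" "x \<le> y" for x y X Y
  proof -
    have "q ^ x * X = q ^ x * (q ^ (y - x) * Y)" using h by (simp add: power_add[symmetric] mult.assoc[symmetric])
    hence X: "X = q ^ (y - x) * Y" using assms(4) by simp
    show ?thesis
    proof (cases "y - x")
      case 0 thus ?thesis using X by simp
    next
      case (Suc d) thus ?thesis using X h(2) by simp
    qed
  qed
  show ?thesis
  proof (cases "x \<le> y")
    case True thus ?thesis using gen assms by blast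
  next
    case False thus ?thesis using gen[of y Y x X] assms by simp
  qed
qed

theorem corollary4p12:
  fixes q n k :: nat
  assumes "prime q"
    and "ord q 2 mod 4 = 2"
    and "n \<ge> 1"
    and "odd k"
  shows "\<not> (\<exists>a :: nat \<Rightarrow> int.
            (\<forall>j\<in>{1..k}. 1 \<le> a j \<and> a j < 3 * int q ^ n) \<and>
            (\<Prod>j=1..k. a j) = (\<Prod>j=1..k. 3 * int q ^ n - a j))"
proof
  assume "\<exists>a :: nat \<Rightarrow> int.
            (\<forall>j\<in>{1..k}. 1 \<le> a j \<and> a j < 3 * int q ^ n) \<and>
            (\<Prod>j=1..k. a j) = (\<Prod>j=1..k. 3 * int q ^ n - a j)"
  then obtain a :: "nat \<Rightarrow> int" where ab: "\<forall>j\<in>{1..k}. 1 \<le> a j \<and> a j < 3 * int q ^ n"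
    and pe: "(\<Prod>j=1..k. a j) = (\<Prod>j=1..k. 3 * int q ^ n - a j)" by blast
  have "ord q 2 \<noteq> 0" using assms(2) by auto
  hence "coprime q 2" using ord_eq_0[of q 2] by simp
  hence q2: "q \<noteq> 2" by auto
  have q3: "q \<ge> 3"
  proof -
    have "q \<ge> 2" using assms(1) prime_ge_2_nat by blast
    thus ?thesis using q2 by linarith
  qed
  have q1: "int q > 1" using q3 by simp
  have pq: "prime (int q)" using assms(1) by simp
  obtain m where m: "odd m" "int q dvd 2 ^ m + 1" using two_pow_neg[OF assms(1,2)] by blast
  have "\<forall>j\<in>{1..k}. \<exists>u a' w b'. a j = int q ^ u * a' \<and> 3 * int q ^ n - a j = int q ^ w * b' \<and>
           \<not> int q dvd a' \<and> \<not> int q dvd b' \<and> a' > 0 \<and> b' > 0 \<and> int q dvd b' ^ m + a' ^ m"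
    using pair[OF assms(1) q2 m] ab by blast
  then obtain U A W B where UAWB: "\<forall>j\<in>{1..k}. a j = int q ^ U j * A j \<and> 3 * int q ^ n - a j = int q ^ W j * B j \<and>
           \<not> int q dvd A j \<and> \<not> int q dvd B j \<and> A j > 0 \<and> B j > 0 \<and> int q dvd B j ^ m + A j ^ m"
    by metis
  have P1: "(\<Prod>j=1..k. a j) = int q ^ (\<Sum>j=1..k. U j) * (\<Prod>j=1..k. A j)"
  proof -
    have "(\<Prod>j=1..k. a j) = (\<Prod>j=1..k. int q ^ U j * A j)"
      by (intro prod.cong refl) (use UAWB in blast)
    thus ?thesis by (simp add: power_sum prod.distrib)
  qed
  have P2: "(\<Prod>j=1..k. 3 * int q ^ n - a j) = int q ^ (\<Sum>j=1..k. W j) * (\<Prod>j=1..k. B j)"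
  proof -
    have "(\<Prod>j=1..k. 3 * int q ^ n - a j) = (\<Prod>j=1..k. int q ^ W j * B j)"
      by (intro prod.cong refl) (use UAWB in blast)
    thus ?thesis by (simp add: power_sum prod.distrib)
  qed
  have nA: "\<not> int q dvd (\<Prod>j=1..k. A j)" using UAWB by (simp add: prime_dvd_prod_iff[OF _ pq])
  have nB: "\<not> int q dvd (\<Prod>j=1..k. B j)" using UAWB by (simp add: prime_dvd_prod_iff[OF _ pq])
  have AB: "(\<Prod>j=1..k. A j) = (\<Prod>j=1..k. B j)"
    using cancel_pow[OF _ nA nB q1] P1 P2 pe by simp
  have cg: "[(\<Prod>j=1..k. B j ^ m) = (\<Prod>j=1..k. - (A j ^ m))] (mod int q)"
  proof (rule cong_prod)
    fix j assume "j \<in> {1..k}"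
    hence "int q dvd B j ^ m + A j ^ m" using UAWB by blast
    thus "[B j ^ m = - (A j ^ m)] (mod int q)" by (simp add: cong_iff_dvd_diff)
  qed
  have "[(\<Prod>j=1..k. A j) ^ m = - ((\<Prod>j=1..k. A j) ^ m)] (mod int q)"
  proof -
    have e1: "(\<Prod>j=1..k. B j ^ m) = (\<Prod>j=1..k. B j) ^ m" by (simp add: prod_power_distrib)
    have e2: "(\<Prod>j=1..k. - (A j ^ m)) = - ((\<Prod>j=1..k. A j) ^ m)"
      using assms(4) by (simp add: prod_uminus prod_power_distrib)
    show ?thesis using cg e1 e2 AB by simp
  qed
  hence "int q dvd 2 * (\<Prod>j=1..k. A j) ^ m" by (simp add: cong_iff_dvd_diff)
  moreover have "\<not> int q dvd 2"
  proof
    assume "int q dvd 2" hence "int q \<le> 2" by (rule zdvd_imp_le) simp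
    with q3 show False by simp
  qed
  ultimately have "int q dvd (\<Prod>j=1..k. A j) ^ m" using pq prime_dvd_mult_iff by blast
  hence "int q dvd (\<Prod>j=1..k. A j)" using pq prime_dvd_power by blast
  with nA show False by contradiction
qed

end
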